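(* Let $\Phi$ be a real $N \times d$ matrix satisfying the Restricted Isometry Condition with parameters $(2n, \varepsilon)$ for $\varepsilon = 0.03/\sqrt{\log n}$. Let $v \neq 0$ be an $n$-sparse vector in $\mathbb{R}^d$ and $x = \Phi v$. Then at any iteration of ROMP run on input $x$ and sparsity level $n$, after the regularization step, the newly selected set $J_0$ satisfies $J_0 \neq \emptyset$, $J_0 \cap I = \emptyset$ (where $I$ is the index set at the start of that iteration), and $$|J_0 \cap \mathrm{supp}(v)| \ge \tfrac{1}{2}|J_0|.$$
   Context: A vector $v \in \mathbb{R}^d$ is $n$-sparse if $|\mathrm{supp}(v)| \le n$. A matrix $\Phi$ satisfies the Restricted Isometry Condition with parameters $(m,\varepsilon)$, $\varepsilon\in(0,1)$, if $(1-\varepsilon)\|w\|_2 \le \|\Phi w\|_2 \le (1+\varepsilon)\|w\|_2$ for all $m$-sparse $w$. For a vector $y$, $y|_T$ denotes its restriction to the coordinates in $T$. ROMP with input $x \in \mathbb{R}^N$ and sparsity level $n$: Initialize $I = \emptyset$, $r = x$. Repeat until $r = 0$: (Identify) let $u = \Phi^* r$ and choose a set $J$ of the $n$ biggest coordinates of $u$ in magnitude, or all nonzero coordinates of $u$, whichever set is smaller; (Regularize) among all subsets $J_0 \subset J$ with $|u(i)| \le 2|u(j)|$ for all $i,j\in J_0$, choose one maximizing $\|u|_{J_0}\|_2$; (Update) $I \leftarrow I \cup J_0$, $y = \operatorname{argmin}_{z \in \mathbb{R}^I}\|x - \Phi z\|_2$, $r = x - \Phi y$. Output $I$. *)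

theory Defs
  imports "HOL-Analysis.Analysis"
begin

text \<open>Vectors in R^d are modelled as real^'d, an N x d matrix as real^'d^'N.\<close>

definition supp :: "real^'d \<Rightarrow> 'd set" where
  "supp w = {i. w $ i \<noteq> 0}"

definition sparse :: "nat \<Rightarrow> real^'d \<Rightarrow> bool" where
  "sparse m w \<longleftrightarrow> card (supp w) \<le> m"

definition RIC :: "real^'d^'N \<Rightarrow> nat \<Rightarrow> real \<Rightarrow> bool" where
  "RIC \<Phi> m \<epsilon> \<longleftrightarrow> 0 < \<epsilon> \<and> \<epsilon> < 1 \<and>
     (\<forall>w. sparse m w \<longrightarrow>
        (1 - \<epsilon>) * norm w \<le> norm (\<Phi> *v w) \<and> norm (\<Phi> *v w) \<le> (1 + \<epsilon>) * norm w)"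

definition restrict_vec :: "real^'d \<Rightarrow> 'd set \<Rightarrow> real^'d" where
  "restrict_vec y T = (\<chi> i. if i \<in> T then y $ i else 0)"

definition romp_identify :: "real^'d \<Rightarrow> nat \<Rightarrow> 'd set \<Rightarrow> bool" where
  "romp_identify u n J \<longleftrightarrow>
     (if card (supp u) \<le> n then J = supp u
      else card J = n \<and> (\<forall>i\<in>J. \<forall>j. j \<notin> J \<longrightarrow> \<bar>u $ j\<bar> \<le> \<bar>u $ i\<bar>))"

definition comparable_set :: "real^'d \<Rightarrow> 'd set \<Rightarrow> bool" where
  "comparable_set u J0 \<longleftrightarrow> (\<forall>i\<in>J0. \<forall>j\<in>J0. \<bar>u $ i\<bar> \<le> 2 * \<bar>u $ j\<bar>)"

definition romp_regularize :: "real^'d \<Rightarrow> 'd set \<Rightarrow> 'd set \<Rightarrow> bool" where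
  "romp_regularize u J J0 \<longleftrightarrow> J0 \<subseteq> J \<and> comparable_set u J0 \<and>
     (\<forall>K. K \<subseteq> J \<and> comparable_set u K \<longrightarrow>
        norm (restrict_vec u K) \<le> norm (restrict_vec u J0))"

definition ls_solution :: "real^'d^'N \<Rightarrow> real^'N \<Rightarrow> 'd set \<Rightarrow> real^'d \<Rightarrow> bool" where
  "ls_solution \<Phi> x I y \<longleftrightarrow> supp y \<subseteq> I \<and>
     (\<forall>z. supp z \<subseteq> I \<longrightarrow> norm (x - \<Phi> *v y) \<le> norm (x - \<Phi> *v z))"

text \<open>States (I, r) reachable at the start of some iteration of ROMP on input x
  with sparsity level n (all admissible tie-breaking choices allowed).\<close>
inductive romp_state :: "real^'d^'N \<Rightarrow> real^'N \<Rightarrow> nat \<Rightarrow> 'd set \<Rightarrow> real^'N \<Rightarrow> bool"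
  for \<Phi> x n where
  init: "romp_state \<Phi> x n {} x"
| step: "\<lbrakk> romp_state \<Phi> x n I r; r \<noteq> 0;
           romp_identify (transpose \<Phi> *v r) n J;
           romp_regularize (transpose \<Phi> *v r) J J0;
           ls_solution \<Phi> x (I \<union> J0) y \<rbrakk>
         \<Longrightarrow> romp_state \<Phi> x n (I \<union> J0) (x - \<Phi> *v y)"

end

theory Submission
  imports Defs
begin


definition sq :: "real^'d \<Rightarrow> 'd set \<Rightarrow> real" where
  "sq u T = (\<Sum>i\<in>T. (u$i)^2)"

lemma norm_sq_vec: "(norm (x::real^'d))^2 = (\<Sum>i\<in>UNIV. (x$i)^2)"
  unfolding power2_norm_eq_inner inner_vec_def by (simp add: power2_eq_square)

lemma norm_restrict_sq: "(norm (restrict_vec u T))^2 = sq u T"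
proof -
  have "(norm (restrict_vec u T))^2 = (\<Sum>i\<in>UNIV. (if i \<in> T then (u$i)^2 else 0))"
    unfolding norm_sq_vec restrict_vec_def by (intro sum.cong) auto
  also have "\<dots> = sq u T" unfolding sq_def by (simp add: sum.If_cases)
  finally show ?thesis .
qed

lemma sq_nonneg: "0 \<le> sq u T" unfolding sq_def by (simp add: sum_nonneg)

lemma sq_mono: "T \<subseteq> T' \<Longrightarrow> sq (u::real^'d) T \<le> sq u T'"
  unfolding sq_def by (rule sum_mono2) auto

lemma sq_union: "T \<inter> T' = {} \<Longrightarrow> sq (u::real^'d) (T \<union> T') = sq u T + sq u T'"
  unfolding sq_def by (rule sum.union_disjoint) auto

lemma sq_UNIV: "sq u UNIV = (norm u)^2" by (simp add: sq_def norm_sq_vec)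

lemma transpose_inner: "(transpose (A::real^'n^'m) *v r) \<bullet> z = r \<bullet> (A *v z)"
  unfolding inner_vec_def matrix_vector_mult_def transpose_def
  unfolding inner_real_def
  apply (simp add: sum_distrib_left sum_distrib_right)
  apply (subst sum.swap) apply (simp add: mult_ac)
  done

lemma restrict_inner: "supp z \<subseteq> T \<Longrightarrow> restrict_vec u T \<bullet> z = u \<bullet> z"
  unfolding inner_vec_def restrict_vec_def supp_def
  by (intro sum.cong) auto

lemma norm_restrict_le: "norm (restrict_vec u T) \<le> norm u"
proof -
  have "(norm (restrict_vec u T))^2 \<le> (norm u)^2"
    using sq_mono[of T UNIV u] by (simp add: norm_restrict_sq sq_UNIV)
  thus ?thesis by (simp add: power_mono_iff)
qed

lemma supp_restrict: "supp (restrict_vec u T) \<subseteq> T"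
  unfolding supp_def restrict_vec_def by auto

lemma restrict_inner_self: "u \<bullet> restrict_vec u T = sq u T"
  by (metis norm_restrict_sq power2_norm_eq_inner restrict_inner supp_restrict)




lemma ric_sub:
  assumes "RIC \<Phi> m \<epsilon>" "supp w \<subseteq> T" "card T \<le> m"
  shows "(1 - \<epsilon>) * norm w \<le> norm (\<Phi> *v w) \<and> norm (\<Phi> *v w) \<le> (1 + \<epsilon>) * norm w"
proof -
  have "card (supp w) \<le> card T" using assms(2) by (intro card_mono) auto
  hence "sparse m w" using assms(3) by (simp add: sparse_def)
  thus ?thesis using assms(1) unfolding RIC_def by blast
qed

lemma supp_add: "supp (a + b) \<subseteq> supp a \<union> supp b"
  unfolding supp_def by auto
lemma supp_diff: "supp (a - b) \<subseteq> supp a \<union> supp b"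
  unfolding supp_def by auto
lemma supp_scale: "supp (c *\<^sub>R a) \<subseteq> supp a"
  unfolding supp_def by auto

lemma inner_disj: "supp a \<subseteq> A \<Longrightarrow> supp b \<subseteq> B \<Longrightarrow> A \<inter> B = {} \<Longrightarrow> a \<bullet> b = 0"
  unfolding inner_vec_def supp_def
  by (intro sum.neutral) (auto simp: inner_real_def)

lemma ric_disj:
  assumes R: "RIC \<Phi> m \<epsilon>" and a: "supp a \<subseteq> A" and b: "supp b \<subseteq> B"
    and D: "A \<inter> B = {}" and C: "card A + card B \<le> m"
  shows "\<bar>(\<Phi> *v a) \<bullet> (\<Phi> *v b)\<bar> \<le> \<epsilon> * ((norm a)^2 + (norm b)^2)"
proof -
  have e: "0 < \<epsilon>" "\<epsilon> < 1" using R by (auto simp: RIC_def)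
  have cAB: "card (A \<union> B) \<le> m" using C card_Un_le[of A B] by linarith
  have ab0: "a \<bullet> b = 0" using inner_disj[OF a b D] .
  define s where "s = (norm a)^2 + (norm b)^2"
  have s1: "(norm (a + b))^2 = s" unfolding s_def power2_norm_eq_inner
    by (simp add: inner_add_left inner_add_right ab0 inner_commute)
  have s2: "(norm (a - b))^2 = s" unfolding s_def power2_norm_eq_inner
    by (simp add: inner_diff_left inner_diff_right ab0 inner_commute)
  have h1: "(1 - \<epsilon>) * norm (a+b) \<le> norm (\<Phi> *v (a+b)) \<and> norm (\<Phi> *v (a+b)) \<le> (1 + \<epsilon>) * norm (a+b)"
    using supp_add[of a b] a b by (intro ric_sub[OF R _ cAB]) auto
  have h2: "(1 - \<epsilon>) * norm (a-b) \<le> norm (\<Phi> *v (a-b)) \<and> norm (\<Phi> *v (a-b)) \<le> (1 + \<epsilon>) * norm (a-b)"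
    using supp_diff[of a b] a b by (intro ric_sub[OF R _ cAB]) auto
  define p where "p = norm (\<Phi> *v (a+b))"
  define q where "q = norm (\<Phi> *v (a-b))"
  have pq: "4 * ((\<Phi> *v a) \<bullet> (\<Phi> *v b)) = p^2 - q^2"
    unfolding p_def q_def power2_norm_eq_inner matrix_vector_right_distrib matrix_vector_mult_diff_distrib
    by (simp add: inner_add_left inner_add_right inner_diff_left inner_diff_right inner_commute)
  have p1: "((1 - \<epsilon>) * norm (a+b))^2 \<le> p^2" using h1 e unfolding p_def
    by (intro power_mono) auto
  have p2: "p^2 \<le> ((1 + \<epsilon>) * norm (a+b))^2" using h1 e unfolding p_def
    by (intro power_mono) auto
  have q1: "((1 - \<epsilon>) * norm (a-b))^2 \<le> q^2" using h2 e unfolding q_def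
    by (intro power_mono) auto
  have q2: "q^2 \<le> ((1 + \<epsilon>) * norm (a-b))^2" using h2 e unfolding q_def
    by (intro power_mono) auto
  have "p^2 - q^2 \<le> 4 * \<epsilon> * s" "- (4 * \<epsilon> * s) \<le> p^2 - q^2"
    using p1 p2 q1 q2 s1 s2 by (simp_all add: power_mult_distrib algebra_simps power2_eq_square)
  thus ?thesis using pq unfolding s_def by linarith
qed

lemma ric_disj2:
  assumes R: "RIC \<Phi> m \<epsilon>" and a: "supp a \<subseteq> A" and b: "supp b \<subseteq> B"
    and D: "A \<inter> B = {}" and C: "card A + card B \<le> m"
  shows "\<bar>(\<Phi> *v a) \<bullet> (\<Phi> *v b)\<bar> \<le> 2 * \<epsilon> * norm a * norm b"
proof (cases "a = 0 \<or> b = 0")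
  case True thus ?thesis by auto
next
  case False
  have e: "0 < \<epsilon>" using R by (auto simp: RIC_def)
  define t where "t = sqrt (norm b / norm a)"
  have na: "norm a > 0" "norm b > 0" using False by auto
  have t: "t > 0" "t^2 = norm b / norm a" using na unfolding t_def by auto
  have "\<bar>(\<Phi> *v (t *\<^sub>R a)) \<bullet> (\<Phi> *v ((1/t) *\<^sub>R b))\<bar> \<le> \<epsilon> * ((norm (t *\<^sub>R a))^2 + (norm ((1/t) *\<^sub>R b))^2)"
    by (rule ric_disj[OF R _ _ D C]) (use a b supp_scale in blast)+
  also have "(\<Phi> *v (t *\<^sub>R a)) \<bullet> (\<Phi> *v ((1/t) *\<^sub>R b)) = (\<Phi> *v a) \<bullet> (\<Phi> *v b)"
    using t by (simp add: matrix_vector_mult_scaleR)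
  also have "(norm (t *\<^sub>R a))^2 + (norm ((1/t) *\<^sub>R b))^2 = t^2 * (norm a)^2 + (norm b)^2 / t^2"
    using t by (simp add: power_mult_distrib power_divide)
  also have "\<dots> = 2 * norm a * norm b" using t na
    by (simp add: power2_eq_square field_simps)
  finally show ?thesis by (simp add: mult_ac)
qed



lemma ls_orth:
  assumes L: "ls_solution \<Phi> x I y" and z: "supp z \<subseteq> I"
  shows "(x - \<Phi> *v y) \<bullet> (\<Phi> *v z) = 0"
proof (rule ccontr)
  define r where "r = x - \<Phi> *v y"
  define p where "p = r \<bullet> (\<Phi> *v z)"
  define q where "q = (norm (\<Phi> *v z))^2"
  assume "(x - \<Phi> *v y) \<bullet> (\<Phi> *v z) \<noteq> 0"
  hence p0: "p \<noteq> 0" unfolding p_def r_def .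
  have "\<Phi> *v z \<noteq> 0" using p0 unfolding p_def by auto
  hence q0: "q > 0" unfolding q_def by auto
  define t where "t = p / q"
  have "supp (y + t *\<^sub>R z) \<subseteq> I" using L z supp_add[of y "t *\<^sub>R z"] supp_scale[of t z]
    unfolding ls_solution_def by blast
  hence "norm r \<le> norm (x - \<Phi> *v (y + t *\<^sub>R z))" using L unfolding ls_solution_def r_def by blast
  also have "x - \<Phi> *v (y + t *\<^sub>R z) = r - t *\<^sub>R (\<Phi> *v z)"
    unfolding r_def by (simp add: matrix_vector_right_distrib matrix_vector_mult_scaleR)
  finally have "(norm r)^2 \<le> (norm (r - t *\<^sub>R (\<Phi> *v z)))^2" by (intro power_mono) auto
  also have "(norm (r - t *\<^sub>R (\<Phi> *v z)))^2 = (norm r)^2 - 2 * t * p + t^2 * q"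
    unfolding power2_norm_eq_inner p_def q_def
    by (simp add: inner_diff_left inner_diff_right inner_commute power2_eq_square algebra_simps)
  also have "\<dots> = (norm r)^2 - p^2 / q" unfolding t_def using q0
    by (simp add: power2_eq_square field_simps)
  finally have "p^2 / q \<le> 0" by simp
  moreover have "p^2 / q > 0" using p0 q0 by simp
  ultimately show False by simp
qed

lemma identify_card: "romp_identify u n J \<Longrightarrow> card J \<le> n"
  unfolding romp_identify_def by (auto split: if_splits)

lemma identify_big:
  fixes u :: "real^'d"
  assumes Id: "romp_identify u n J" and T: "card T \<le> n"
  shows "sq u T \<le> sq u J"
proof (cases "card (supp u) \<le> n")
  case True
  hence J: "J = supp u" using Id unfolding romp_identify_def by simp
  have "sq u T = sq u (T \<inter> supp u)" unfolding sq_def supp_def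
    by (intro sum.mono_neutral_right) auto
  also have "\<dots> \<le> sq u J" unfolding J by (intro sq_mono) auto
  finally show ?thesis .
next
  case False
  hence cJ: "card J = n" and big: "\<forall>i\<in>J. \<forall>j. j \<notin> J \<longrightarrow> \<bar>u $ j\<bar> \<le> \<bar>u $ i\<bar>"
    using Id unfolding romp_identify_def by auto
  have fin: "finite A" for A :: "'d set" by simp
  have cc: "card (T - J) \<le> card (J - T)"
  proof -
    have "card (T - J) = card T - card (T \<inter> J)" by (simp add: card_Diff_subset_Int)
    moreover have "card (J - T) = card J - card (J \<inter> T)" by (simp add: card_Diff_subset_Int)
    ultimately show ?thesis using T cJ by (simp add: Int_commute)
  qed
  have le: "(u$i)^2 \<le> (u$j)^2" if "i \<in> T - J" "j \<in> J - T" for i j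
  proof -
    have "\<bar>u$i\<bar> \<le> \<bar>u$j\<bar>" using big that by auto
    thus ?thesis by (simp add: abs_le_square_iff)
  qed
  have dbl: "real (card (J - T)) * sq u (T - J) \<le> real (card (T - J)) * sq u (J - T)"
  proof -
    have "real (card (J - T)) * sq u (T - J) = (\<Sum>i\<in>T - J. \<Sum>j\<in>J - T. (u$i)^2)"
      unfolding sq_def by (simp add: sum_distrib_left mult.commute)
    also have "\<dots> \<le> (\<Sum>i\<in>T - J. \<Sum>j\<in>J - T. (u$j)^2)"
      by (intro sum_mono le) auto
    also have "\<dots> = real (card (T - J)) * sq u (J - T)"
      unfolding sq_def by simp
    finally show ?thesis .
  qed
  have key: "sq u (T - J) \<le> sq u (J - T)"
  proof (cases "card (J - T) = 0")
    case True
    hence "card (T - J) = 0" using cc by linarith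
    hence "T - J = {}" by (metis card_eq_0_iff fin)
    hence "sq u (T - J) = 0" unfolding sq_def by (metis sum.empty)
    thus ?thesis using sq_nonneg[of u "J - T"] by simp
  next
    case False
    hence pos: "real (card (J - T)) > 0" by (metis of_nat_0_less_iff gr0I)
    have "real (card (J - T)) * sq u (T - J) \<le> real (card (J - T)) * sq u (J - T)"
      using dbl cc sq_nonneg[of u "J - T"]
      by (meson mult_right_mono of_nat_le_iff order_trans)
    thus ?thesis using pos by simp
  qed
  have e1: "T \<inter> J \<union> (T - J) = T" by blast
  have e2: "T \<inter> J \<union> (J - T) = J" by blast
  have d1: "T \<inter> J \<inter> (T - J) = {}" by blast
  have d2: "T \<inter> J \<inter> (J - T) = {}" by blast
  have "sq u T = sq u (T \<inter> J) + sq u (T - J)"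
    using sq_union[of "T \<inter> J" "T - J" u] unfolding e1 using d1 by simp
  also have "\<dots> \<le> sq u (T \<inter> J) + sq u (J - T)" using key by simp
  also have "\<dots> = sq u J" using sq_union[of "T \<inter> J" "J - T" u]
    unfolding e2 using d2 by simp
  finally show ?thesis .
qed



lemma pow2sq: "((2::real)^k)^2 = 4^k"
  by (metis power_mult power_mult_distrib mult.commute num_double numeral_times_numeral power2_eq_square)

lemma reg_comp:
  assumes R: "romp_regularize u J J0" and K: "K \<subseteq> J" "comparable_set u K"
  shows "sq u K \<le> sq u J0"
proof -
  have "norm (restrict_vec u K) \<le> norm (restrict_vec u J0)" using R K unfolding romp_regularize_def by blast
  hence "(norm (restrict_vec u K))^2 \<le> (norm (restrict_vec u J0))^2" by (intro power_mono) auto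
  thus ?thesis by (simp add: norm_restrict_sq)
qed

lemma reg_bound:
  fixes u :: "real^'d"
  assumes R: "romp_regularize u J J0" and c: "card J \<le> 4^m"
  shows "3 * sq u J \<le> 4 * (real m + 1) * sq u J0"
proof (cases "J = {}")
  case True
  thus ?thesis using sq_nonneg[of u J0] by (simp add: sq_def)
next
  case False
  have fin: "finite A" for A :: "'d set" by simp
  define M where "M = Max ((\<lambda>i. \<bar>u$i\<bar>) ` J)"
  have Mge: "\<bar>u$i\<bar> \<le> M" if "i \<in> J" for i unfolding M_def using that fin by auto
  have "M \<in> (\<lambda>i. \<bar>u$i\<bar>) ` J" unfolding M_def using False fin by (intro Max_in) auto
  then obtain i0 where i0: "i0 \<in> J" "M = \<bar>u$i0\<bar>" by auto
  have M2: "M^2 \<le> sq u J"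
  proof -
    have "M^2 = (u$i0)^2" using i0 by simp
    also have "\<dots> \<le> sq u J" unfolding sq_def using i0 fin by (intro member_le_sum) auto
    finally show ?thesis .
  qed
  have claim: "sq u {i\<in>J. M/2^L < \<bar>u$i\<bar>} \<le> real L * sq u J0" for L
  proof (induction L)
    case 0
    have "{i\<in>J. M/2^0 < \<bar>u$i\<bar>} = {}" using Mge by force
    hence "sq u {i\<in>J. M/2^0 < \<bar>u$i\<bar>} = 0" unfolding sq_def by (metis sum.empty)
    thus ?case by simp
  next
    case (Suc L)
    define Rg where "Rg = {i\<in>J. M/2^(Suc L) < \<bar>u$i\<bar> \<and> \<bar>u$i\<bar> \<le> M/2^L}"
    have eq: "{i\<in>J. M/2^(Suc L) < \<bar>u$i\<bar>} = {i\<in>J. M/2^L < \<bar>u$i\<bar>} \<union> Rg"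
    proof -
      have "M/2^(Suc L) \<le> M/2^L" if "i \<in> J" for i
      proof -
        have "0 \<le> M" using Mge[OF that] by linarith
        moreover have "(0::real) < 2^L" by simp
        ultimately show ?thesis by (simp add: field_simps)
      qed
      note h = this
      show ?thesis unfolding Rg_def
      proof (rule set_eqI, rule iffI)
        fix i assume "i \<in> {i\<in>J. M/2^(Suc L) < \<bar>u$i\<bar>}"
        thus "i \<in> {i\<in>J. M/2^L < \<bar>u$i\<bar>} \<union> {i\<in>J. M/2^(Suc L) < \<bar>u$i\<bar> \<and> \<bar>u$i\<bar> \<le> M/2^L}"
          by auto
      next
        fix i assume a: "i \<in> {i\<in>J. M/2^L < \<bar>u$i\<bar>} \<union> {i\<in>J. M/2^(Suc L) < \<bar>u$i\<bar> \<and> \<bar>u$i\<bar> \<le> M/2^L}"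
        hence iJ: "i \<in> J" by blast
        from a h[OF iJ] show "i \<in> {i\<in>J. M/2^(Suc L) < \<bar>u$i\<bar>}"
          by (simp only: mem_Collect_eq Un_iff) linarith
      qed
    qed
    have disj: "{i\<in>J. M/2^L < \<bar>u$i\<bar>} \<inter> Rg = {}" unfolding Rg_def by auto
    have cmp: "comparable_set u Rg" unfolding comparable_set_def Rg_def
    proof (intro ballI)
      fix i j assume "i \<in> {i\<in>J. M/2^(Suc L) < \<bar>u$i\<bar> \<and> \<bar>u$i\<bar> \<le> M/2^L}"
        "j \<in> {i\<in>J. M/2^(Suc L) < \<bar>u$i\<bar> \<and> \<bar>u$i\<bar> \<le> M/2^L}"
      hence "\<bar>u$i\<bar> \<le> M/2^L" "M/2^(Suc L) < \<bar>u$j\<bar>" by auto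
      moreover have "M/2^L = 2 * (M/2^(Suc L))" by simp
      ultimately show "\<bar>u$i\<bar> \<le> 2 * \<bar>u$j\<bar>" by linarith
    qed
    have "sq u Rg \<le> sq u J0" by (rule reg_comp[OF R _ cmp]) (auto simp: Rg_def)
    thus ?case unfolding eq sq_union[OF disj] using Suc.IH by (simp add: algebra_simps)
  qed
  define L where "L = m + 1"
  define Tl where "Tl = {i\<in>J. \<not> M/2^L < \<bar>u$i\<bar>}"
  have split: "sq u J = sq u {i\<in>J. M/2^L < \<bar>u$i\<bar>} + sq u Tl"
  proof -
    have "J = {i\<in>J. M/2^L < \<bar>u$i\<bar>} \<union> Tl" unfolding Tl_def by auto
    moreover have "{i\<in>J. M/2^L < \<bar>u$i\<bar>} \<inter> Tl = {}" unfolding Tl_def by auto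
    ultimately show ?thesis using sq_union by metis
  qed
  have tail: "sq u Tl \<le> real (card J) * (M/2^L)^2"
  proof -
    have "sq u Tl \<le> real (card Tl) * (M/2^L)^2" unfolding sq_def
    proof (rule sum_bounded_above)
      fix i assume "i \<in> Tl"
      hence "\<bar>u$i\<bar> \<le> M/2^L" unfolding Tl_def by auto
      hence "\<bar>u$i\<bar>^2 \<le> (M/2^L)^2" by (intro power_mono) auto
      thus "(u$i)^2 \<le> (M/2^L)^2" by simp
    qed
    also have "\<dots> \<le> real (card J) * (M/2^L)^2"
      by (intro mult_right_mono) (auto simp: Tl_def intro!: card_mono)
    finally show ?thesis .
  qed
  have "real (card J) * (M/2^L)^2 = real (card J) * M^2 / (4 * 4^m)"
    unfolding L_def by (simp add: power_divide pow2sq)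
  also have "\<dots> \<le> 4^m * M^2 / (4 * 4^m)"
    using c by (intro divide_right_mono mult_right_mono) (auto simp: of_nat_le_iff[symmetric])
  also have "\<dots> = M^2 / 4" by simp
  finally have "sq u Tl \<le> sq u J / 4" using tail M2 by linarith
  thus ?thesis using split claim[of L] unfolding L_def by (simp add: algebra_simps)
qed



lemma ln2_gt: "ln (2::real) > 1/2"
proof -
  have "exp (1/2::real)^2 = exp 1" by (simp add: power2_eq_square flip: exp_add)
  also have "\<dots> < 4" using e_less_272 by simp
  also have "(4::real) = 2^2" by simp
  finally have "exp (1/2::real) < 2"
    by (rule power_less_imp_less_base) auto
  hence "ln (exp (1/2::real)) < ln 2" by (intro ln_less_cancel_iff[THEN iffD2]) auto
  thus ?thesis by simp
qed

lemma ln4_gt: "ln (4::real) > 1"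
proof -
  have "exp 1 < (4::real)" using e_less_272 by simp
  hence "ln (exp 1) < ln (4::real)" by (intro ln_less_cancel_iff[THEN iffD2]) auto
  thus ?thesis by simp
qed

lemma log_choice:
  assumes "n \<ge> (2::nat)"
  shows "\<exists>m. n \<le> 4^m \<and> real m < ln (real n) + 1"
proof -
  define m where "m = (LEAST m. n \<le> 4^m)"
  have "(2::nat)^n \<le> 4^n" by (intro power_mono) auto
  hence ex: "n \<le> 4^n" using less_exp[of n] by linarith
  have m1: "n \<le> 4^m" unfolding m_def using ex by (rule LeastI)
  have m0: "m \<ge> 1"
  proof (rule ccontr)
    assume "\<not> m \<ge> 1" hence "m = 0" by simp
    thus False using m1 assms by simp
  qed
  have "\<not> n \<le> 4^(m-1)" unfolding m_def
    by (rule not_less_Least) (use m0 m_def in simp)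
  hence lt: "real (4^(m-1)) < real n" by simp
  have "ln (real (4^(m-1))) < ln (real n)" using lt by (intro ln_less_cancel_iff[THEN iffD2]) auto
  hence "real (m-1) * ln 4 < ln (real n)" by (simp add: ln_realpow)
  moreover have "real (m - 1) \<le> real (m-1) * ln 4" using ln4_gt by (simp add: mult_le_cancel_left1)
  ultimately have "real (m-1) < ln (real n)" by linarith
  hence "real m < ln (real n) + 1" using m0 by (simp add: of_nat_diff)
  thus ?thesis using m1 by blast
qed

lemma numeric:
  fixes l \<epsilon> W sJ sJ0 :: real
  assumes l: "l \<ge> ln 2" and e: "\<epsilon> = 0.03 / sqrt l" and W: "0 < W"
    and B: "(1-\<epsilon>)^4 * W \<le> sJ" and A: "3 * sJ \<le> 4 * (m+1) * sJ0" and m: "m < l + 1"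
    and C: "sJ0 \<le> 80 * \<epsilon>^2 * W" and P: "0 \<le> sJ0"
  shows False
proof -
  have l2: "l > 1/2" using l ln2_gt by linarith
  have e2: "\<epsilon>^2 = 0.0009 / l" using l2 unfolding e by (simp add: power_divide)
  have sl: "sqrt l \<ge> 0.7" using l2 by (intro real_le_rsqrt) (simp add: power2_eq_square)
  have "\<epsilon> \<le> 0.03 / 0.7" unfolding e using sl l2 by (intro divide_left_mono) auto
  hence "1 - \<epsilon> \<ge> 0.95" by simp
  hence "(0.95::real)^4 \<le> (1-\<epsilon>)^4" by (intro power_mono) auto
  moreover have "(0.8::real) \<le> 0.95^4" by (simp add: power_numeral_reduce)
  ultimately have "0.8 * W \<le> (1-\<epsilon>)^4 * W" using W by (intro mult_right_mono) auto
  hence "0.8 * W \<le> sJ" using B by linarith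
  hence "2.4 * W \<le> 4 * (m+1) * sJ0" using A by linarith
  also have "\<dots> \<le> 4 * (l + 2) * sJ0"
    using m P by (intro mult_right_mono) auto
  also have "\<dots> \<le> 4 * (l + 2) * (80 * (0.0009 / l) * W)"
    using C e2 l2 by (intro mult_left_mono) auto
  finally have "2.4 * W \<le> 4 * (l + 2) * (80 * (0.0009 / l) * W)" .
  hence "(2.4 * l) * W \<le> (0.288 * (l + 2)) * W" using l2 by (simp add: field_simps)
  hence "2.4 * l \<le> 0.288 * (l + 2)" using W by (simp only: mult_le_cancel_right_pos)
  thus False using l2 by (simp add: algebra_simps)
qed



lemma core:
  fixes \<Phi> :: "real^'d^'N" and v y :: "real^'d" and n :: nat and I J J0 :: "'d set" and r :: "real^'N"
  assumes R: "RIC \<Phi> (2 * n) \<epsilon>" and eps: "\<epsilon> = 0.03 / sqrt (ln (real n))" and n2: "n \<ge> 2"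
    and sp: "card (supp v) \<le> n"
    and L: "ls_solution \<Phi> (\<Phi> *v v) I y"
    and inv: "card (I - supp v) \<le> card (I \<inter> supp v)"
    and rdef: "r = \<Phi> *v v - \<Phi> *v y" and r0: "r \<noteq> 0"
    and Id: "romp_identify (transpose \<Phi> *v r) n J"
    and Rg: "romp_regularize (transpose \<Phi> *v r) J J0"
  shows "J0 \<noteq> {} \<and> J0 \<inter> I = {} \<and> card J0 \<le> 2 * card (J0 \<inter> supp v)"
proof -
  have fin: "finite A" for A :: "'d set" by simp
  define S where "S = supp v"
  define u where "u = transpose \<Phi> *v r"
  define w where "w = v - y"
  have e: "0 < \<epsilon>" "\<epsilon> < 1" using R by (auto simp: RIC_def)
  have rw: "r = \<Phi> *v w" unfolding rdef w_def by (simp add: matrix_vector_mult_diff_distrib)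
  have orth: "u \<bullet> z = 0" if "supp z \<subseteq> I" for z
    unfolding u_def transpose_inner rdef using ls_orth[OF L that] by simp
  have uI: "u$i = 0" if "i \<in> I" for i
  proof -
    have "supp (restrict_vec u {i}) \<subseteq> I" using supp_restrict[of u "{i}"] that by auto
    hence "sq u {i} = 0" using orth restrict_inner_self by metis
    thus ?thesis by (simp add: sq_def)
  qed
  have yI: "supp y \<subseteq> I" using L unfolding ls_solution_def by blast
  have wS: "supp w \<subseteq> S \<union> I" using yI unfolding w_def S_def supp_def by auto
  have cS: "card S \<le> n" using sp S_def by simp
  have cIS: "card (I - S) \<le> n"
  proof -
    have "card (I \<inter> S) \<le> card S" by (intro card_mono) auto
    thus ?thesis using inv cS unfolding S_def by linarith
  qed
  have cSI: "card (S \<union> I) \<le> 2 * n"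
  proof -
    have "S \<union> I = S \<union> (I - S)" by blast
    hence "card (S \<union> I) \<le> card S + card (I - S)" using card_Un_le by metis
    thus ?thesis using cS cIS by linarith
  qed
  have ricw: "(1 - \<epsilon>) * norm w \<le> norm r" using ric_sub[OF R wS cSI] rw by simp
  have w0: "w \<noteq> 0" using r0 rw by auto
  define S0 where "S0 = S - I"
  define v0 where "v0 = restrict_vec w S0"
  have v0S: "supp v0 \<subseteq> S0" unfolding v0_def by (rule supp_restrict)
  have wv0: "supp (w - v0) \<subseteq> I"
    using wS unfolding v0_def S0_def supp_def restrict_vec_def by auto
  have "(norm r)^2 = r \<bullet> (\<Phi> *v w)" by (simp add: rw power2_norm_eq_inner)
  also have "\<dots> = r \<bullet> (\<Phi> *v v0) + r \<bullet> (\<Phi> *v (w - v0))"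
    by (simp add: matrix_vector_mult_diff_distrib inner_diff_right)
  also have "r \<bullet> (\<Phi> *v (w - v0)) = 0" using orth[OF wv0] unfolding u_def transpose_inner .
  also have "r \<bullet> (\<Phi> *v v0) = u \<bullet> v0" unfolding u_def transpose_inner ..
  also have "\<dots> = restrict_vec u S0 \<bullet> v0" using restrict_inner[OF v0S] by simp
  also have "\<dots> \<le> norm (restrict_vec u S0) * norm v0" by (rule norm_cauchy_schwarz)
  also have "\<dots> \<le> norm (restrict_vec u S0) * norm w"
    unfolding v0_def by (intro mult_left_mono norm_restrict_le) auto
  finally have h1: "(norm r)^2 \<le> norm (restrict_vec u S0) * norm w" by simp
  have "((1 - \<epsilon>) * norm w)^2 \<le> (norm r)^2" using ricw e by (intro power_mono) auto
  hence "(1 - \<epsilon>)^2 * norm w * norm w \<le> norm (restrict_vec u S0) * norm w"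
    using h1 by (simp add: power_mult_distrib power2_eq_square mult_ac)
  hence h2: "(1 - \<epsilon>)^2 * norm w \<le> norm (restrict_vec u S0)" using w0 by simp
  hence "((1 - \<epsilon>)^2 * norm w)^2 \<le> (norm (restrict_vec u S0))^2" using e by (intro power_mono) auto
  hence h3: "(1 - \<epsilon>)^4 * (norm w)^2 \<le> sq u S0"
    by (simp add: norm_restrict_sq power_mult_distrib flip: power_mult)
  have cS0: "card S0 \<le> n" using cS card_mono[of S S0] unfolding S0_def by fastforce
  have B: "(1 - \<epsilon>)^4 * (norm w)^2 \<le> sq u J"
    using h3 identify_big[OF Id[folded u_def] cS0] by linarith
  obtain m where m: "n \<le> 4^m" "real m < ln (real n) + 1" using log_choice[OF n2] by blast
  have cJ: "card J \<le> n" using identify_card[OF Id] .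
  have A: "3 * sq u J \<le> 4 * (real m + 1) * sq u J0"
    using reg_bound[OF Rg[folded u_def], of m] cJ m by linarith
  have W: "0 < (norm w)^2" using w0 by simp
  have e4: "0 < (1 - \<epsilon>)^4" using e by simp
  have sJpos: "0 < sq u J" using B W e4 by (smt (verit) mult_pos_pos)
  have sJ0pos: "0 < sq u J0"
  proof -
    have "0 < 4 * (real m + 1) * sq u J0" using A sJpos by linarith
    thus ?thesis using sq_nonneg[of u J0] by (simp add: zero_less_mult_iff)
  qed
  have J0ne: "J0 \<noteq> {}" using sJ0pos by (auto simp: sq_def)
  have cmpJ0: "comparable_set u J0" and J0J: "J0 \<subseteq> J"
    using Rg unfolding u_def romp_regularize_def by auto
  have J0I: "J0 \<inter> I = {}"
  proof (rule ccontr)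
    assume "J0 \<inter> I \<noteq> {}"
    then obtain i where i: "i \<in> J0" "i \<in> I" by blast
    have "\<forall>j\<in>J0. u$j = 0"
    proof
      fix j assume "j \<in> J0"
      hence "\<bar>u$j\<bar> \<le> 2 * \<bar>u$i\<bar>" using cmpJ0 i unfolding comparable_set_def by blast
      thus "u$j = 0" using uI[OF i(2)] by simp
    qed
    hence "sq u J0 = 0" unfolding sq_def by simp
    thus False using sJ0pos by simp
  qed
  have half: "card J0 \<le> 2 * card (J0 \<inter> S)"
  proof (rule ccontr)
    assume nh: "\<not> card J0 \<le> 2 * card (J0 \<inter> S)"
    define A0 where "A0 = J0 \<inter> S"
    define K where "K = J0 - S"
    have cJ0: "card J0 = card A0 + card K" unfolding A0_def K_def
      using card_Int_Diff[of J0 S] fin by simp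
    have AK: "card A0 < card K" using nh cJ0 unfolding A0_def by linarith
    have le: "(u$i)^2 \<le> 4 * (u$j)^2" if "i \<in> A0" "j \<in> K" for i j
    proof -
      have "\<bar>u$i\<bar> \<le> 2 * \<bar>u$j\<bar>" using cmpJ0 that unfolding comparable_set_def A0_def K_def by blast
      hence "\<bar>u$i\<bar>^2 \<le> (2 * \<bar>u$j\<bar>)^2" by (intro power_mono) auto
      thus ?thesis by (simp add: power_mult_distrib)
    qed
    have "real (card K) * sq u A0 = (\<Sum>i\<in>A0. \<Sum>j\<in>K. (u$i)^2)"
      unfolding sq_def by (simp add: sum_distrib_left mult.commute)
    also have "\<dots> \<le> (\<Sum>i\<in>A0. \<Sum>j\<in>K. 4 * (u$j)^2)" by (intro sum_mono le) auto
    also have "\<dots> = real (card A0) * (4 * sq u K)" unfolding sq_def by (simp add: sum_distrib_left)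
    also have "\<dots> \<le> real (card K) * (4 * sq u K)"
      using AK sq_nonneg[of u K] by (intro mult_right_mono) auto
    finally have "real (card K) * sq u A0 \<le> real (card K) * (4 * sq u K)" .
    hence sA: "sq u A0 \<le> 4 * sq u K" using AK by simp
    have "sq u J0 = sq u A0 + sq u K"
    proof -
      have "J0 = A0 \<union> K" "A0 \<inter> K = {}" unfolding A0_def K_def by auto
      thus ?thesis using sq_union by metis
    qed
    hence C1: "sq u J0 \<le> 5 * sq u K" using sA by linarith
    define b where "b = restrict_vec u K"
    have bK: "supp b \<subseteq> K" unfolding b_def by (rule supp_restrict)
    have KS: "S \<inter> K = {}" and KI: "(I - S) \<inter> K = {}" unfolding K_def using J0I by auto
    have cK: "card K \<le> n" using card_mono[of J K] J0J cJ unfolding K_def by fastforce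
    define w1 where "w1 = restrict_vec w S"
    define w2 where "w2 = restrict_vec w (I - S)"
    have wsplit: "w = w1 + w2"
    proof (rule iffD2[OF vec_eq_iff], rule allI)
      fix i show "w$i = (w1 + w2)$i"
        using wS unfolding w1_def w2_def restrict_vec_def supp_def by auto
    qed
    have "sq u K = u \<bullet> b" unfolding b_def by (rule restrict_inner_self[symmetric])
    also have "\<dots> = r \<bullet> (\<Phi> *v b)" unfolding u_def by (rule transpose_inner)
    finally have sqK: "sq u K = (\<Phi> *v w) \<bullet> (\<Phi> *v b)" unfolding rw .
    note sqK
    hence "sq u K = (\<Phi> *v w1) \<bullet> (\<Phi> *v b) + (\<Phi> *v w2) \<bullet> (\<Phi> *v b)"
      unfolding wsplit by (simp add: matrix_vector_right_distrib inner_add_left)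
    also have "\<dots> \<le> 2 * \<epsilon> * norm w1 * norm b + 2 * \<epsilon> * norm w2 * norm b"
    proof -
      have "\<bar>(\<Phi> *v w1) \<bullet> (\<Phi> *v b)\<bar> \<le> 2 * \<epsilon> * norm w1 * norm b"
        by (rule ric_disj2[OF R _ bK KS]) (use cS cK in \<open>auto simp: w1_def supp_restrict\<close>)
      moreover have "\<bar>(\<Phi> *v w2) \<bullet> (\<Phi> *v b)\<bar> \<le> 2 * \<epsilon> * norm w2 * norm b"
        by (rule ric_disj2[OF R _ bK KI]) (use cIS cK in \<open>auto simp: w2_def supp_restrict\<close>)
      ultimately show ?thesis by linarith
    qed
    also have "\<dots> \<le> 2 * \<epsilon> * norm w * norm b + 2 * \<epsilon> * norm w * norm b"
      unfolding w1_def w2_def using e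
      by (intro add_mono mult_right_mono mult_left_mono norm_restrict_le) auto
    finally have "sq u K \<le> 4 * \<epsilon> * norm w * norm b" by (simp add: mult_ac)
    moreover have nb: "(norm b)^2 = sq u K" unfolding b_def by (rule norm_restrict_sq)
    ultimately have "norm b * norm b \<le> (4 * \<epsilon> * norm w) * norm b" by (simp add: power2_eq_square mult_ac)
    hence "norm b \<le> 4 * \<epsilon> * norm w"
      by (cases "norm b = 0") (use e in \<open>auto simp: mult_le_cancel_right\<close>)
    hence "(norm b)^2 \<le> (4 * \<epsilon> * norm w)^2" by (intro power_mono) auto
    hence "sq u K \<le> 16 * \<epsilon>^2 * (norm w)^2" using nb by (simp add: power_mult_distrib)
    hence C: "sq u J0 \<le> 80 * \<epsilon>^2 * (norm w)^2" using C1 by linarith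
    have lnn: "ln (real n) \<ge> ln 2" using n2 by simp
    show False
      by (rule numeric[OF lnn eps W B A m(2) C sq_nonneg])
  qed
  show ?thesis using J0ne J0I half unfolding S_def by blast
qed



lemma invariant:
  fixes \<Phi> :: "real^'d^'N" and v :: "real^'d"
  assumes R: "RIC \<Phi> (2 * n) \<epsilon>" and eps: "\<epsilon> = 0.03 / sqrt (ln (real n))" and n2: "n \<ge> 2"
    and sp: "card (supp v) \<le> n"
  shows "romp_state \<Phi> (\<Phi> *v v) n I r \<Longrightarrow>
    (\<exists>y. ls_solution \<Phi> (\<Phi> *v v) I y \<and> r = \<Phi> *v v - \<Phi> *v y) \<and> card (I - supp v) \<le> card (I \<inter> supp v)"
proof (induction rule: romp_state.induct)
  case init
  have "supp (0::real^'d) = {}" by (simp add: supp_def)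
  moreover have "norm (\<Phi> *v v - \<Phi> *v 0) \<le> norm (\<Phi> *v v - \<Phi> *v z)" if "supp z \<subseteq> {}" for z :: "real^'d"
  proof -
    have "z = 0" using that unfolding supp_def by (simp add: vec_eq_iff)
    thus ?thesis by simp
  qed
  ultimately have "ls_solution \<Phi> (\<Phi> *v v) {} 0" unfolding ls_solution_def by blast
  thus ?case by auto
next
  case (step I r J J0 y)
  have fin: "finite A" for A :: "'d set" by simp
  from step.IH obtain y0 where y0: "ls_solution \<Phi> (\<Phi> *v v) I y0" "r = \<Phi> *v v - \<Phi> *v y0" by blast
  have c: "J0 \<noteq> {} \<and> J0 \<inter> I = {} \<and> card J0 \<le> 2 * card (J0 \<inter> supp v)"
    by (rule core[OF R eps n2 sp y0(1) _ y0(2) step.hyps(2) step.hyps(3) step.hyps(4)]) (use step.IH in blast)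
  define S where "S = supp v"
  have d: "J0 \<inter> I = {}" using c by blast
  have e1: "card ((I \<union> J0) - S) = card (I - S) + card (J0 - S)"
    by (subst card_Un_disjoint[symmetric]) (use d in \<open>auto intro: arg_cong[where f=card]\<close>)
  have e2: "card ((I \<union> J0) \<inter> S) = card (I \<inter> S) + card (J0 \<inter> S)"
    by (subst card_Un_disjoint[symmetric]) (use d in \<open>auto intro: arg_cong[where f=card]\<close>)
  have e3: "card J0 = card (J0 \<inter> S) + card (J0 - S)" using card_Int_Diff[of J0 S] by simp
  have "card ((I \<union> J0) - S) \<le> card ((I \<union> J0) \<inter> S)"
    using e1 e2 e3 c step.IH unfolding S_def by linarith
  thus ?case using step.hyps(5) unfolding S_def by blast
qed


theorem theorem3p1:
  fixes \<Phi> :: "real^'d^'N" and v :: "real^'d" and n :: nat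
    and I J J0 :: "'d set" and r :: "real^'N"
  assumes "RIC \<Phi> (2 * n) (0.03 / sqrt (ln (real n)))"
    and "v \<noteq> 0" and "sparse n v"
    and "romp_state \<Phi> (\<Phi> *v v) n I r" and "r \<noteq> 0"
    and "romp_identify (transpose \<Phi> *v r) n J"
    and "romp_regularize (transpose \<Phi> *v r) J J0"
  shows "J0 \<noteq> {} \<and> J0 \<inter> I = {} \<and> real (card (J0 \<inter> supp v)) \<ge> real (card J0) / 2"
proof -
  have sp: "card (supp v) \<le> n" using assms(3) unfolding sparse_def .
  have n2: "n \<ge> 2"
  proof (rule ccontr)
    assume "\<not> n \<ge> 2"
    hence "n = 0 \<or> n = 1" by auto
    thus False
    proof
      assume "n = 0"
      hence "supp v = {}" using sp by simp
      hence "v = 0" unfolding supp_def by (simp add: vec_eq_iff)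
      thus False using assms(2) by simp
    next
      assume "n = 1"
      thus False using assms(1) unfolding RIC_def by simp
    qed
  qed
  have inv: "(\<exists>y. ls_solution \<Phi> (\<Phi> *v v) I y \<and> r = \<Phi> *v v - \<Phi> *v y) \<and> card (I - supp v) \<le> card (I \<inter> supp v)"
    by (rule invariant[OF assms(1) refl n2 sp assms(4)])
  then obtain y where y: "ls_solution \<Phi> (\<Phi> *v v) I y" "r = \<Phi> *v v - \<Phi> *v y" by blast
  have "J0 \<noteq> {} \<and> J0 \<inter> I = {} \<and> card J0 \<le> 2 * card (J0 \<inter> supp v)"
    by (rule core[OF assms(1) refl n2 sp y(1) _ y(2) assms(5) assms(6) assms(7)]) (use inv in blast)
  thus ?thesis by linarith
qed

end
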